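(* Let $\mathcal{D}$ be a finite set of disks in the plane, and let $(C_1,C_2)$ be a pair of congruent disks of smallest possible common radius such that every $D\in\mathcal{D}$ intersects $C_1$ or $C_2$. Assume the centers of $C_1$ and $C_2$ are distinct and let $\ell$ be the perpendicular bisector of the segment connecting them. Then for $i\in\{1,2\}$, $C_i\cap D\neq\emptyset$ for every $D\in\mathcal{D}$ whose center lies on the same (closed) side of $\ell$ as the center of $C_i$.
   Context: Disks are closed disks in the plane. The paper assumes throughout that no disk of $\mathcal{D}$ contains another disk of $\mathcal{D}$. *)

theory Defs
  imports "HOL-Analysis.Analysis"
begin

text \<open>The plane is modelled as the complex numbers. A disk is given by a pair
  (center, radius); the disk itself is the closed ball.\<close>

type_synonym disk = "complex \<times> real"

definition disk_set :: "disk \<Rightarrow> complex set" where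
  "disk_set D = cball (fst D) (snd D)"

text \<open>Standing assumptions of the paper: a finite family of (proper) disks,
  none containing another.\<close>
definition valid_family :: "disk set \<Rightarrow> bool" where
  "valid_family \<D> \<longleftrightarrow> finite \<D> \<and> (\<forall>D\<in>\<D>. snd D > 0) \<and>
     (\<forall>D\<in>\<D>. \<forall>D'\<in>\<D>. D \<noteq> D' \<longrightarrow> \<not> disk_set D \<subseteq> disk_set D')"

definition two_pierce :: "disk set \<Rightarrow> complex \<Rightarrow> complex \<Rightarrow> real \<Rightarrow> bool" where
  "two_pierce \<D> c1 c2 r \<longleftrightarrow> r \<ge> 0 \<and>
     (\<forall>D\<in>\<D>. cball c1 r \<inter> disk_set D \<noteq> {} \<or> cball c2 r \<inter> disk_set D \<noteq> {})"

end

theory Submission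
  imports Defs
begin

lemma cball_meet:
  fixes c p :: "'a::real_normed_vector"
  assumes "r \<ge> 0" "s \<ge> 0" "dist p c \<le> r + s"
  shows "cball c r \<inter> cball p s \<noteq> {}"
proof (cases "dist p c \<le> r")
  case True
  then have "p \<in> cball c r \<inter> cball p s" using assms by (simp add: dist_commute)
  then show ?thesis by blast
next
  case False
  define d where "d = dist p c"
  have dpos: "d > r" "d > 0" using False assms(1) d_def by auto
  define x where "x = c + (r / d) *\<^sub>R (p - c)"
  have nd: "norm (p - c) = d" using d_def by (simp add: dist_norm)
  have "dist c x = r"
    using dpos nd assms(1) by (simp add: x_def dist_norm)
  moreover have "p - x = (1 - r/d) *\<^sub>R (p - c)"
    by (simp add: x_def algebra_simps)
  then have "dist p x = (1 - r/d) * d"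
    using dpos nd by (simp add: dist_norm)
  then have "dist p x = d - r" using dpos by (simp add: left_diff_distrib)
  ultimately have "x \<in> cball c r \<inter> cball p s" using assms d_def by simp
  then show ?thesis by blast
qed

lemma hit_iff:
  assumes "r \<ge> 0" "snd D > 0"
  shows "cball c r \<inter> disk_set D \<noteq> {} \<longleftrightarrow> dist (fst D) c \<le> r + snd D"
proof
  assume "cball c r \<inter> disk_set D \<noteq> {}"
  then show "dist (fst D) c \<le> r + snd D"
    using disjoint_cballI[of r "snd D" c "fst D"] by (force simp: disk_set_def dist_commute)
next
  assume "dist (fst D) c \<le> r + snd D"
  then show "cball c r \<inter> disk_set D \<noteq> {}"
    using cball_meet[of r "snd D" "fst D" c] assms by (simp add: disk_set_def)
qed

theorem mainTheorem13:
  fixes \<D> :: "disk set" and c1 c2 :: complex and r :: real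
  assumes "valid_family \<D>"
    and "two_pierce \<D> c1 c2 r"
    and "\<And>c1' c2' r'. two_pierce \<D> c1' c2' r' \<Longrightarrow> r \<le> r'"
    and "c1 \<noteq> c2"
  shows "(\<forall>D\<in>\<D>. dist (fst D) c1 \<le> dist (fst D) c2 \<longrightarrow> cball c1 r \<inter> disk_set D \<noteq> {}) \<and>
         (\<forall>D\<in>\<D>. dist (fst D) c2 \<le> dist (fst D) c1 \<longrightarrow> cball c2 r \<inter> disk_set D \<noteq> {})"
proof -
  have r0: "r \<ge> 0" and pierce: "\<forall>D\<in>\<D>. cball c1 r \<inter> disk_set D \<noteq> {} \<or> cball c2 r \<inter> disk_set D \<noteq> {}"
    using assms(2) by (auto simp: two_pierce_def)
  have pos: "\<forall>D\<in>\<D>. snd D > 0" using assms(1) by (simp add: valid_family_def)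
  show ?thesis
  proof (intro conjI ballI impI)
    fix D assume D: "D \<in> \<D>" and le: "dist (fst D) c1 \<le> dist (fst D) c2"
    have "dist (fst D) c1 \<le> r + snd D \<or> dist (fst D) c2 \<le> r + snd D"
      using pierce D hit_iff[OF r0] pos by blast
    then show "cball c1 r \<inter> disk_set D \<noteq> {}"
      using le hit_iff[OF r0] pos D by fastforce
  next
    fix D assume D: "D \<in> \<D>" and le: "dist (fst D) c2 \<le> dist (fst D) c1"
    have "dist (fst D) c1 \<le> r + snd D \<or> dist (fst D) c2 \<le> r + snd D"
      using pierce D hit_iff[OF r0] pos by blast
    then show "cball c2 r \<inter> disk_set D \<noteq> {}"
      using le hit_iff[OF r0] pos D by fastforce
  qed
qed

end
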